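(* Let $p$ be a prime and $X$ a countable set. For every $A\in\mathcal{B}(\mathbb{Q}_p(X))$ we have $\ker(A)=\operatorname{im}(A^* )^\perp$.
   Context: $\mathbb{Q}_p(X)$ is the set of maps $\xi:X\to\mathbb{Q}_p$ with $|\xi(i)|_p\le1$ for all but finitely many $i$, a $\mathbb{Z}_p$-module under coordinatewise operations, with the topology $\tau$ in which $A\subseteq\mathbb{Q}_p(X)$ is open iff for every finite $P\subseteq X$ the set $A\cap\big(\prod_{i\in P}\mathbb{Q}_p\times\prod_{j\in X\setminus P}\mathbb{Z}_p\big)$ is open in the product topology. $\mathcal{B}(\mathbb{Q}_p(X))$ is the set of $\tau$-continuous $\mathbb{Z}_p$-linear maps. The pairing is $\langle\xi,\eta\rangle=\iota\big(\sum_{i\in X}(\xi(i)\eta(i)+\mathbb{Z}_p)\big)\in S^1$ with $\iota:\mathbb{Q}_p/\mathbb{Z}_p\cong\mathbb{Z}[1/p]/\mathbb{Z}\hookrightarrow\mathbb{R}/\mathbb{Z}\cong S^1$ canonical. $A^*$ is the unique operator in $\mathcal{B}(\mathbb{Q}_p(X))$ with $\langle A\xi,\eta\rangle=\langle\xi,A^*\eta\rangle$ for all $\xi,\eta$. For $K\subseteq\mathbb{Q}_p(X)$, $K^\perp=\{\xi:\langle\xi,\eta\rangle=1\ \forall\eta\in K\}$ (trivial value of the pairing). *)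

theory Defs
  imports "HOL-Analysis.Analysis" "HOL-Computational_Algebra.Primes"
begin

text \<open>An element of Z_p is represented by its compatible sequence of residues
  z n = (z mod p^n) with 0 <= z n < p^n.  An element of Q_p is represented in the
  normal form (k, z) meaning z / p^k, with z in Z_p and either k = 0 or z not divisible
  by p; this representation is unique.\<close>

type_synonym zp = "nat \<Rightarrow> int"
type_synonym qp = "nat \<times> zp"

definition Zp :: "int \<Rightarrow> zp set" where
  "Zp p = {z. \<forall>n. 0 \<le> z n \<and> z n < p ^ n \<and> z (Suc n) mod p ^ n = z n}"

definition zp_add :: "int \<Rightarrow> zp \<Rightarrow> zp \<Rightarrow> zp" where
  "zp_add p z w = (\<lambda>n. (z n + w n) mod p ^ n)"

definition zp_mul :: "int \<Rightarrow> zp \<Rightarrow> zp \<Rightarrow> zp" where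
  "zp_mul p z w = (\<lambda>n. (z n * w n) mod p ^ n)"

definition zp_neg :: "int \<Rightarrow> zp \<Rightarrow> zp" where
  "zp_neg p z = (\<lambda>n. (- z n) mod p ^ n)"

definition zp_of_int :: "int \<Rightarrow> int \<Rightarrow> zp" where
  "zp_of_int p a = (\<lambda>n. a mod p ^ n)"

definition zp_val :: "zp \<Rightarrow> nat" where
  "zp_val z = (LEAST n. z (Suc n) \<noteq> 0)"

definition qp_norm :: "int \<Rightarrow> nat \<Rightarrow> zp \<Rightarrow> qp" where
  "qp_norm p k z =
     (if (\<forall>n. z n = 0) then (0, \<lambda>n. 0)
      else (let m = min k (zp_val z) in (k - m, \<lambda>n. z (n + m) div p ^ m)))"

definition Qp :: "int \<Rightarrow> qp set" where
  "Qp p = {(k, z). z \<in> Zp p \<and> (k = 0 \<or> z 1 \<noteq> 0)}"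

definition qp_zero :: qp where
  "qp_zero = (0, \<lambda>n. 0)"

definition qp_add :: "int \<Rightarrow> qp \<Rightarrow> qp \<Rightarrow> qp" where
  "qp_add p x y = (case x of (k, z) \<Rightarrow> case y of (l, w) \<Rightarrow>
      qp_norm p (max k l)
        (zp_add p (zp_mul p (zp_of_int p (p ^ (max k l - k))) z)
                  (zp_mul p (zp_of_int p (p ^ (max k l - l))) w)))"

definition qp_mul :: "int \<Rightarrow> qp \<Rightarrow> qp \<Rightarrow> qp" where
  "qp_mul p x y = (case x of (k, z) \<Rightarrow> case y of (l, w) \<Rightarrow> qp_norm p (k + l) (zp_mul p z w))"

definition qp_neg :: "int \<Rightarrow> qp \<Rightarrow> qp" where
  "qp_neg p x = (case x of (k, z) \<Rightarrow> (k, zp_neg p z))"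

text \<open>Z_p as a subset of Q_p (elements with |x|_p <= 1).\<close>
definition ZpQ :: "int \<Rightarrow> qp set" where
  "ZpQ p = {x \<in> Qp p. fst x = 0}"

text \<open>The ball x + p^n Z_p.\<close>
definition qp_ball :: "int \<Rightarrow> qp \<Rightarrow> nat \<Rightarrow> qp set" where
  "qp_ball p x n = {y \<in> Qp p. fst (qp_add p y (qp_neg p x)) = 0 \<and> snd (qp_add p y (qp_neg p x)) n = 0}"

definition qp_top :: "int \<Rightarrow> qp topology" where
  "qp_top p = topology (\<lambda>U. U \<subseteq> Qp p \<and> (\<forall>x\<in>U. \<exists>n. qp_ball p x n \<subseteq> U))"

text \<open>Representative in [0,1) of the class of x in Q_p / Z_p = Z[1/p]/Z.\<close>
definition qp_frac :: "int \<Rightarrow> qp \<Rightarrow> real" where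
  "qp_frac p x = (case x of (k, z) \<Rightarrow> real_of_int (z k) / real_of_int (p ^ k))"

definition QpX :: "int \<Rightarrow> ('x \<Rightarrow> qp) set" where
  "QpX p = {\<xi>. (\<forall>i. \<xi> i \<in> Qp p) \<and> finite {i. \<xi> i \<notin> ZpQ p}}"

definition vzero :: "'x \<Rightarrow> qp" where
  "vzero = (\<lambda>i. qp_zero)"

definition vadd :: "int \<Rightarrow> ('x \<Rightarrow> qp) \<Rightarrow> ('x \<Rightarrow> qp) \<Rightarrow> ('x \<Rightarrow> qp)" where
  "vadd p \<xi> \<eta> = (\<lambda>i. qp_add p (\<xi> i) (\<eta> i))"

text \<open>Scalar multiplication by a in Z_p (a given as element of ZpQ).\<close>
definition vsmult :: "int \<Rightarrow> qp \<Rightarrow> ('x \<Rightarrow> qp) \<Rightarrow> ('x \<Rightarrow> qp)" where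
  "vsmult p a \<xi> = (\<lambda>i. qp_mul p a (\<xi> i))"

definition qp_box :: "int \<Rightarrow> 'x set \<Rightarrow> ('x \<Rightarrow> qp) set" where
  "qp_box p P = {\<xi>. \<forall>i. \<xi> i \<in> (if i \<in> P then Qp p else ZpQ p)}"

definition box_top :: "int \<Rightarrow> 'x set \<Rightarrow> ('x \<Rightarrow> qp) topology" where
  "box_top p P = product_topology
      (\<lambda>i. if i \<in> P then qp_top p else subtopology (qp_top p) (ZpQ p)) UNIV"

definition tau :: "int \<Rightarrow> ('x \<Rightarrow> qp) topology" where
  "tau p = topology (\<lambda>A. A \<subseteq> QpX p \<and>
      (\<forall>P. finite P \<longrightarrow> openin (box_top p P) (A \<inter> qp_box p P)))"

definition Bops :: "int \<Rightarrow> (('x \<Rightarrow> qp) \<Rightarrow> ('x \<Rightarrow> qp)) set" where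
  "Bops p = {A. (\<forall>\<xi>\<in>QpX p. A \<xi> \<in> QpX p)
     \<and> (\<forall>\<xi>\<in>QpX p. \<forall>\<eta>\<in>QpX p. A (vadd p \<xi> \<eta>) = vadd p (A \<xi>) (A \<eta>))
     \<and> (\<forall>a\<in>ZpQ p. \<forall>\<xi>\<in>QpX p. A (vsmult p a \<xi>) = vsmult p a (A \<xi>))
     \<and> continuous_map (tau p) (tau p) A}"

text \<open>The pairing with values in S^1 (unit circle in the complex plane);
  iota sends the class of t in Z[1/p]/Z to exp(2 pi i t).\<close>
definition pairing :: "int \<Rightarrow> ('x \<Rightarrow> qp) \<Rightarrow> ('x \<Rightarrow> qp) \<Rightarrow> complex" where
  "pairing p \<xi> \<eta> = cis (2 * pi *
      (\<Sum>i\<in>{i. qp_mul p (\<xi> i) (\<eta> i) \<notin> ZpQ p}. qp_frac p (qp_mul p (\<xi> i) (\<eta> i))))"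

definition is_adjoint :: "int \<Rightarrow> (('x \<Rightarrow> qp) \<Rightarrow> ('x \<Rightarrow> qp)) \<Rightarrow> (('x \<Rightarrow> qp) \<Rightarrow> ('x \<Rightarrow> qp)) \<Rightarrow> bool" where
  "is_adjoint p A B \<longleftrightarrow> B \<in> Bops p \<and>
     (\<forall>\<xi>\<in>QpX p. \<forall>\<eta>\<in>QpX p. pairing p (A \<xi>) \<eta> = pairing p \<xi> (B \<eta>))"

definition kerX :: "int \<Rightarrow> (('x \<Rightarrow> qp) \<Rightarrow> ('x \<Rightarrow> qp)) \<Rightarrow> ('x \<Rightarrow> qp) set" where
  "kerX p A = {\<xi> \<in> QpX p. A \<xi> = vzero}"

definition imX :: "int \<Rightarrow> (('x \<Rightarrow> qp) \<Rightarrow> ('x \<Rightarrow> qp)) \<Rightarrow> ('x \<Rightarrow> qp) set" where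
  "imX p A = A ` QpX p"

definition perpX :: "int \<Rightarrow> ('x \<Rightarrow> qp) set \<Rightarrow> ('x \<Rightarrow> qp) set" where
  "perpX p K = {\<xi> \<in> QpX p. \<forall>\<eta>\<in>K. pairing p \<xi> \<eta> = 1}"

end

theory Submission
  imports Defs
begin

lemma zp_compat:
  assumes "z \<in> Zp p" "p > 1"
  shows "z (n + j) mod p ^ n = z n"
proof (induction j)
  case 0
  then show ?case using assms by (simp add: Zp_def)
next
  case (Suc j)
  have "z (Suc (n + j)) mod p ^ (n + j) = z (n + j)" using assms by (simp add: Zp_def)
  moreover have "p ^ n dvd p ^ (n + j)" by (simp add: power_add)
  ultimately have "z (Suc (n + j)) mod p ^ n = z (n + j) mod p ^ n"
    by (metis mod_mod_cancel)
  then show ?case using Suc by simp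
qed

lemma qp_mul_zero_right: "qp_mul p x qp_zero = qp_zero"
  by (cases x) (simp add: qp_mul_def qp_zero_def qp_norm_def zp_mul_def)

lemma qp_mul_zero_left: "qp_mul p qp_zero x = qp_zero"
  by (cases x) (simp add: qp_mul_def qp_zero_def qp_norm_def zp_mul_def)

lemma qp_zero_ZpQ: "p > 1 \<Longrightarrow> qp_zero \<in> ZpQ p"
  by (simp add: ZpQ_def Qp_def Zp_def qp_zero_def)

lemma pairing_zero: "p > 1 \<Longrightarrow> pairing p vzero \<eta> = 1"
  by (simp add: pairing_def vzero_def qp_mul_zero_left qp_zero_ZpQ)

lemma key_component:
  assumes p: "p > 1" and x: "x \<in> Qp p" and nz: "x \<noteq> qp_zero"
  shows "\<exists>y\<in>Qp p. qp_mul p x y \<notin> ZpQ p \<and> 0 < qp_frac p (qp_mul p x y)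
            \<and> qp_frac p (qp_mul p x y) < 1"
proof -
  obtain k z where xk: "x = (k, z)" by (cases x)
  have zZ: "z \<in> Zp p" and kz: "k = 0 \<or> z 1 \<noteq> 0" using x xk by (auto simp: Qp_def)
  have z0: "z 0 = 0" using zZ by (auto simp: Zp_def elim!: allE[of _ 0])
  have notall: "\<not> (\<forall>n. z n = 0)"
  proof
    assume h: "\<forall>n. z n = 0"
    then have "z = (\<lambda>n. 0)" by auto
    with kz h have "x = qp_zero" using xk by (auto simp: qp_zero_def)
    with nz show False by simp
  qed
  then obtain n where "z n \<noteq> 0" by auto
  with z0 obtain m where "z (Suc m) \<noteq> 0" by (cases n) auto
  define v where "v = zp_val z"
  have zv1: "z (Suc v) \<noteq> 0" unfolding v_def zp_val_def
    by (rule LeastI[of _ m]) fact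
  have zv: "z v = 0"
  proof (cases v)
    case 0 then show ?thesis using z0 by simp
  next
    case (Suc u)
    have "u < v" using Suc by simp
    then have "\<not> z (Suc u) \<noteq> 0" unfolding v_def zp_val_def by (rule not_less_Least)
    then show ?thesis using Suc by simp
  qed
  define one where "one = zp_of_int p 1"
  define y where "y = (v + 1, one)"
  have pn: "\<And>n. p ^ n > 0" using p by simp
  have one_Zp: "one \<in> Zp p"
    unfolding one_def zp_of_int_def Zp_def
  proof (intro CollectI allI conjI)
    fix n
    show "0 \<le> 1 mod p ^ n" using pn[of n] by simp
    show "1 mod p ^ n < p ^ n" using pn[of n] by simp
    have "p ^ n dvd p ^ Suc n" by simp
    then show "1 mod p ^ Suc n mod p ^ n = 1 mod p ^ n" by (rule mod_mod_cancel)
  qed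
  have one1: "one 1 = 1" using p by (simp add: one_def zp_of_int_def)
  have yQ: "y \<in> Qp p" using one_Zp one1 by (simp add: y_def Qp_def)
  have zm: "zp_mul p z one = z"
  proof
    fix n
    have "zp_mul p z one n = (z n * (1 mod p ^ n)) mod p ^ n"
      by (simp add: zp_mul_def one_def zp_of_int_def)
    also have "\<dots> = z n mod p ^ n" by (metis mod_mult_right_eq mult_1_right)
    also have "\<dots> = z n" using zZ by (simp add: Zp_def)
    finally show "zp_mul p z one n = z n" .
  qed
  have prod: "qp_mul p x y = (k + 1, \<lambda>n. z (n + v) div p ^ v)"
    using notall by (simp add: qp_mul_def xk y_def zm qp_norm_def Let_def v_def)
  define a where "a = z (k + 1 + v)"
  have amod1: "a mod p ^ (v + 1) = z (v + 1)"
    unfolding a_def using zp_compat[OF zZ p, of "v+1" k] by (simp add: add.commute add.left_commute)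
  have amod0: "a mod p ^ v = 0"
    unfolding a_def using zp_compat[OF zZ p, of "v" "k+1"] zv by (simp add: add.commute add.left_commute)
  have a0: "0 \<le> a" and alt: "a < p ^ (k + 1 + v)"
    using zZ unfolding a_def Zp_def mem_Collect_eq
    by (metis (no_types))+
  have anz: "a \<noteq> 0" using amod1 zv1 by auto
  define b where "b = a div p ^ v"
  have ab: "a = p ^ v * b" 
  proof -
    have "p ^ v dvd a" using amod0 by (simp add: mod_eq_0_iff_dvd)
    then show ?thesis unfolding b_def by simp
  qed
  have bpos: "b > 0" 
  proof -
    have "0 < a" using a0 anz by simp
    then have "0 < p ^ v * b" using ab by simp
    then show ?thesis using pn[of v] zero_less_mult_pos by blast
  qed
  have blt: "b < p ^ (k + 1)"
  proof -
    have e: "p ^ (k + 1 + v) = p ^ v * p ^ (k + 1)" by (simp only: power_add mult.commute)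
    have "p ^ v * b < p ^ v * p ^ (k + 1)" using alt unfolding e ab .
    then show ?thesis using pn[of v] by simp
  qed
  have frac: "qp_frac p (qp_mul p x y) = real_of_int b / real_of_int (p ^ (k + 1))"
    by (simp add: prod qp_frac_def b_def a_def add.commute add.left_commute)
  have "real_of_int b < real_of_int (p ^ (k+1))" using blt by linarith
  moreover have "real_of_int (p ^ (k+1)) > 0" using pn[of "k+1"] by linarith
  ultimately have f1: "qp_frac p (qp_mul p x y) < 1" and f0: "0 < qp_frac p (qp_mul p x y)"
    using bpos by (auto simp: frac divide_less_eq)
  have "qp_mul p x y \<notin> ZpQ p" by (simp add: prod ZpQ_def)
  with yQ f0 f1 show ?thesis by blast
qed

lemma key:
  assumes p: "p > 1" and zeta: "\<zeta> \<in> QpX p" and nz: "\<zeta> i \<noteq> qp_zero"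
  shows "\<exists>\<eta>\<in>QpX p. pairing p \<zeta> \<eta> \<noteq> 1"
proof -
  have "\<zeta> i \<in> Qp p" using zeta by (simp add: QpX_def)
  from key_component[OF p this nz] obtain y where yQ: "y \<in> Qp p"
    and nZ: "qp_mul p (\<zeta> i) y \<notin> ZpQ p" and f0: "0 < qp_frac p (qp_mul p (\<zeta> i) y)"
    and f1: "qp_frac p (qp_mul p (\<zeta> i) y) < 1" by blast
  define \<eta> where "\<eta> = (\<lambda>j. qp_zero)(i := y)"
  have zQ: "qp_zero \<in> Qp p" using qp_zero_ZpQ[OF p] by (simp add: ZpQ_def)
  have "{j. \<eta> j \<notin> ZpQ p} \<subseteq> {i}" using qp_zero_ZpQ[OF p] by (auto simp: \<eta>_def)
  then have fin: "finite {j. \<eta> j \<notin> ZpQ p}" by (rule finite_subset) simp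
  have "\<forall>j. \<eta> j \<in> Qp p" using yQ zQ by (simp add: \<eta>_def)
  then have etaQ: "\<eta> \<in> QpX p" using fin by (simp add: QpX_def)
  have S: "{j. qp_mul p (\<zeta> j) (\<eta> j) \<notin> ZpQ p} = {i}"
    using nZ qp_zero_ZpQ[OF p] by (auto simp: \<eta>_def qp_mul_zero_right)
  define t where "t = qp_frac p (qp_mul p (\<zeta> i) y)"
  have pe: "pairing p \<zeta> \<eta> = cis (2 * pi * t)"
    unfolding pairing_def S by (simp add: t_def \<eta>_def)
  have "cis (2 * pi * t) \<noteq> 1"
  proof
    assume "cis (2 * pi * t) = 1"
    then have "cos (2 * pi * t) = 1" by (metis Re_complex_of_real complex_Re_numeral cis.simps(1) one_complex.simps(1))
    then obtain n :: int where n: "2 * pi * t = n * 2 * pi" by (auto simp: cos_one_2pi_int)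
    then have "t = n" by simp
    moreover have "0 < t" "t < 1" using f0 f1 by (auto simp: t_def)
    ultimately have "0 < real_of_int n" "real_of_int n < 1" by auto
    then have "0 < n" "n < 1" by simp_all
    then show False by simp
  qed
  then have "pairing p \<zeta> \<eta> \<noteq> 1" using pe by simp
  with etaQ show ?thesis by blast
qed

theorem lemma2p10:
  fixes p :: int and A Astar :: "('x::countable \<Rightarrow> qp) \<Rightarrow> ('x \<Rightarrow> qp)"
  assumes "prime p"
    and "A \<in> Bops p"
    and "is_adjoint p A Astar"
  shows "kerX p A = perpX p (imX p Astar)"
proof -
  have p: "p > 1" using assms(1) by (simp add: prime_gt_1_int)
  have AQ: "\<And>\<xi>. \<xi> \<in> QpX p \<Longrightarrow> A \<xi> \<in> QpX p" using assms(2) by (simp add: Bops_def)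
  have adj: "\<And>\<xi> \<eta>. \<xi> \<in> QpX p \<Longrightarrow> \<eta> \<in> QpX p \<Longrightarrow> pairing p (A \<xi>) \<eta> = pairing p \<xi> (Astar \<eta>)"
    using assms(3) by (simp add: is_adjoint_def)
  show ?thesis
  proof (intro set_eqI iffI)
    fix \<xi> assume "\<xi> \<in> kerX p A"
    then have xQ: "\<xi> \<in> QpX p" and A0: "A \<xi> = vzero" by (auto simp: kerX_def)
    show "\<xi> \<in> perpX p (imX p Astar)"
      unfolding perpX_def imX_def
      using xQ by (auto simp: adj[OF xQ, symmetric] A0 pairing_zero[OF p])
  next
    fix \<xi> assume "\<xi> \<in> perpX p (imX p Astar)"
    then have xQ: "\<xi> \<in> QpX p" and perp: "\<And>\<eta>. \<eta> \<in> QpX p \<Longrightarrow> pairing p \<xi> (Astar \<eta>) = 1"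
      by (auto simp: perpX_def imX_def)
    have "A \<xi> = vzero"
    proof (rule ccontr)
      assume "A \<xi> \<noteq> vzero"
      then obtain i where "A \<xi> i \<noteq> qp_zero" by (auto simp: vzero_def)
      from key[OF p AQ[OF xQ] this] obtain \<eta> where "\<eta> \<in> QpX p" "pairing p (A \<xi>) \<eta> \<noteq> 1" by blast
      with perp adj[OF xQ] show False by metis
    qed
    with xQ show "\<xi> \<in> kerX p A" by (simp add: kerX_def)
  qed
qed

end
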